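(* If an ES combination operator $\nabla$ satisfies (ESF7) and (ESF8W), then $\nabla$ satisfies (ESF-P).
   Context: Setting: epistemic space $(\mathcal E,B,\mathcal L_{\mathcal P})$ ($\mathcal E$ nonempty, $B:\mathcal E\to$ propositional formulas over finite $\mathcal P$, image modulo equivalence exactly the consistent formulas); agents: well-ordered set $\mathcal S$; society: nonempty finite $N\subseteq\mathcal S$; $N$-profile $\Phi:N\to\mathcal E$, $E_i=\Phi(i)$, identified with $E_i$ if $N=\{i\}$; $\Phi\upharpoonright_M$ restriction; partition $\{N_1,N_2\}$: nonempty disjoint parts with union $N$. An ES combination operator maps (profile, $E$) to $\nabla(\Phi,E)\in\mathcal E$. (ESF7): $B(\nabla(\Phi\upharpoonright_{N_1},E))\wedge B(\nabla(\Phi\upharpoonright_{N_2},E))\vdash B(\nabla(\Phi,E))$ for all partitions, profiles, $E$. (ESF8W): if $B(\nabla(\Phi\upharpoonright_{N_1},E))\wedge B(\nabla(\Phi\upharpoonright_{N_2},E))\nvdash\bot$ then $B(\nabla(\Phi,E))\vdash B(\nabla(\Phi\upharpoonright_{N_1},E))\vee B(\nabla(\Phi\upharpoonright_{N_2},E))$. (ESF-P): for every society $N$, $N$-profile $\Phi$ and $E,E'\in\mathcal E$, if $\bigwedge_{i\in N}B(\nabla(E_i,E))\nvdash\bot$ and $B(\nabla(E_i,E))\wedge B(E')\vdash\bot$ for all $i\in N$, then $B(\nabla(\Phi,E))\wedge B(E')\vdash\bot$. *)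

theory Defs
  imports Main
begin

datatype 'p form =
    Atom 'p | FBot | FNeg "'p form" | FAnd "'p form" "'p form"
  | FOr "'p form" "'p form" | FImp "'p form" "'p form"

primrec sat :: "('p \<Rightarrow> bool) \<Rightarrow> 'p form \<Rightarrow> bool" where
  "sat v (Atom p) = v p"
| "sat v FBot = False"
| "sat v (FNeg f) = (\<not> sat v f)"
| "sat v (FAnd f g) = (sat v f \<and> sat v g)"
| "sat v (FOr f g) = (sat v f \<or> sat v g)"
| "sat v (FImp f g) = (sat v f \<longrightarrow> sat v g)"

text \<open>Classical entailment (by completeness, semantic), written f \<turnstile> g.\<close>
definition entails :: "'p form \<Rightarrow> 'p form \<Rightarrow> bool" (infix "\<turnstile>" 55) where
  "f \<turnstile> g \<longleftrightarrow> (\<forall>v. sat v f \<longrightarrow> sat v g)"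

definition consistent :: "'p form \<Rightarrow> bool" where
  "consistent f \<longleftrightarrow> \<not> (f \<turnstile> FBot)"

definition equiv_form :: "'p form \<Rightarrow> 'p form \<Rightarrow> bool" where
  "equiv_form f g \<longleftrightarrow> (f \<turnstile> g \<and> g \<turnstile> f)"

definition consistent_set :: "'p form set \<Rightarrow> bool" where
  "consistent_set \<Gamma> \<longleftrightarrow> (\<exists>v. \<forall>f\<in>\<Gamma>. sat v f)"

text \<open>Epistemic states form the (nonempty) type 'e; the atoms form a finite type 'p.
  B maps each state to a formula; its image modulo equivalence is exactly the
  consistent formulas.\<close>
definition epistemic_space :: "('e \<Rightarrow> 'p::finite form) \<Rightarrow> bool" where
  "epistemic_space B \<longleftrightarrow>
     (\<forall>E. consistent (B E)) \<and> (\<forall>f. consistent f \<longrightarrow> (\<exists>E. equiv_form (B E) f))"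

text \<open>An N-profile is a partial map from agents to states whose domain N
  (the society) is finite and nonempty. Restriction is map restriction;
  the single-agent profile of E_i is [i \<mapsto> E_i].\<close>
definition profile :: "('s \<rightharpoonup> 'e) \<Rightarrow> bool" where
  "profile \<Phi> \<longleftrightarrow> finite (dom \<Phi>) \<and> dom \<Phi> \<noteq> {}"

definition partition2 :: "'s set \<Rightarrow> 's set \<Rightarrow> 's set \<Rightarrow> bool" where
  "partition2 N N1 N2 \<longleftrightarrow> N1 \<noteq> {} \<and> N2 \<noteq> {} \<and> N1 \<inter> N2 = {} \<and> N1 \<union> N2 = N"

definition ESF7 :: "('e \<Rightarrow> 'p form) \<Rightarrow> (('s \<rightharpoonup> 'e) \<Rightarrow> 'e \<Rightarrow> 'e) \<Rightarrow> bool" where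
  "ESF7 B nabla \<longleftrightarrow>
    (\<forall>\<Phi> N1 N2 E. profile \<Phi> \<longrightarrow> partition2 (dom \<Phi>) N1 N2 \<longrightarrow>
       FAnd (B (nabla (\<Phi> |` N1) E)) (B (nabla (\<Phi> |` N2) E)) \<turnstile> B (nabla \<Phi> E))"

definition ESF8W :: "('e \<Rightarrow> 'p form) \<Rightarrow> (('s \<rightharpoonup> 'e) \<Rightarrow> 'e \<Rightarrow> 'e) \<Rightarrow> bool" where
  "ESF8W B nabla \<longleftrightarrow>
    (\<forall>\<Phi> N1 N2 E. profile \<Phi> \<longrightarrow> partition2 (dom \<Phi>) N1 N2 \<longrightarrow>
       consistent (FAnd (B (nabla (\<Phi> |` N1) E)) (B (nabla (\<Phi> |` N2) E))) \<longrightarrow>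
       B (nabla \<Phi> E) \<turnstile> FOr (B (nabla (\<Phi> |` N1) E)) (B (nabla (\<Phi> |` N2) E)))"

definition ESF_P :: "('e \<Rightarrow> 'p form) \<Rightarrow> (('s \<rightharpoonup> 'e) \<Rightarrow> 'e \<Rightarrow> 'e) \<Rightarrow> bool" where
  "ESF_P B nabla \<longleftrightarrow>
    (\<forall>\<Phi> E E'. profile \<Phi> \<longrightarrow>
       consistent_set ((\<lambda>i. B (nabla [i \<mapsto> the (\<Phi> i)] E)) ` dom \<Phi>) \<longrightarrow>
       (\<forall>i\<in>dom \<Phi>. FAnd (B (nabla [i \<mapsto> the (\<Phi> i)] E)) (B E') \<turnstile> FBot) \<longrightarrow>
       FAnd (B (nabla \<Phi> E)) (B E') \<turnstile> FBot)"

end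

theory Submission
  imports Defs
begin

lemma restr_single: "i \<in> dom \<Phi> \<Longrightarrow> \<Phi> |` {i} = [i \<mapsto> the (\<Phi> i)]"
  by (auto simp: restrict_map_def fun_eq_iff)

lemma key:
  fixes B :: "'e \<Rightarrow> 'p::finite form"
    and nabla :: "('s \<rightharpoonup> 'e) \<Rightarrow> 'e \<Rightarrow> 'e"
  assumes e7: "ESF7 B nabla" and e8: "ESF8W B nabla"
    and fin: "finite N" and ne: "N \<noteq> {}"
  shows "\<forall>\<Phi>. dom \<Phi> = N \<longrightarrow>
     (\<forall>v. (\<forall>i\<in>N. sat v (B (nabla [i \<mapsto> the (\<Phi> i)] E))) \<longrightarrow> sat v (B (nabla \<Phi> E))) \<and>
     (consistent_set ((\<lambda>i. B (nabla [i \<mapsto> the (\<Phi> i)] E)) ` N) \<longrightarrow>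
       (\<forall>v. sat v (B (nabla \<Phi> E)) \<longrightarrow> (\<exists>i\<in>N. sat v (B (nabla [i \<mapsto> the (\<Phi> i)] E)))))"
  using fin ne
proof (induction N rule: finite_ne_induct)
  case (singleton x)
  show ?case
  proof (intro allI impI)
    fix \<Phi> :: "'s \<rightharpoonup> 'e" assume d: "dom \<Phi> = {x}"
    have "x \<in> dom \<Phi>" using d by simp
    then obtain y where y: "\<Phi> x = Some y" by auto
    have "\<Phi> z = None" if "z \<noteq> x" for z
    proof -
      have "z \<notin> dom \<Phi>" using d that by simp
      then show ?thesis by (simp add: domIff)
    qed
    with y have "\<Phi> = [x \<mapsto> the (\<Phi> x)]" by (simp add: fun_eq_iff)
    then show "(\<forall>v. (\<forall>i\<in>{x}. sat v (B (nabla [i \<mapsto> the (\<Phi> i)] E))) \<longrightarrow> sat v (B (nabla \<Phi> E))) \<and>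
     (consistent_set ((\<lambda>i. B (nabla [i \<mapsto> the (\<Phi> i)] E)) ` {x}) \<longrightarrow>
       (\<forall>v. sat v (B (nabla \<Phi> E)) \<longrightarrow> (\<exists>i\<in>{x}. sat v (B (nabla [i \<mapsto> the (\<Phi> i)] E)))))"
      by (metis singletonD singletonI)
  qed
next
  case (insert x F)
  show ?case
  proof (intro allI impI)
    fix \<Phi> :: "'s \<rightharpoonup> 'e" assume d: "dom \<Phi> = insert x F"
    define \<Phi>1 where "\<Phi>1 = \<Phi> |` {x}"
    define \<Phi>2 where "\<Phi>2 = \<Phi> |` F"
    have prof: "profile \<Phi>" using d insert by (auto simp: profile_def)
    have part: "partition2 (dom \<Phi>) {x} F" using d insert by (auto simp: partition2_def)
    have p1: "\<Phi>1 = [x \<mapsto> the (\<Phi> x)]" unfolding \<Phi>1_def using d by (simp add: restr_single)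
    have d2: "dom \<Phi>2 = F" using d \<Phi>2_def by auto
    have s2: "\<And>i. i \<in> F \<Longrightarrow> the (\<Phi>2 i) = the (\<Phi> i)" by (simp add: \<Phi>2_def)
    have IH: "(\<forall>v. (\<forall>i\<in>F. sat v (B (nabla [i \<mapsto> the (\<Phi> i)] E))) \<longrightarrow> sat v (B (nabla \<Phi>2 E))) \<and>
     (consistent_set ((\<lambda>i. B (nabla [i \<mapsto> the (\<Phi> i)] E)) ` F) \<longrightarrow>
       (\<forall>v. sat v (B (nabla \<Phi>2 E)) \<longrightarrow> (\<exists>i\<in>F. sat v (B (nabla [i \<mapsto> the (\<Phi> i)] E)))))"
      using insert.IH[rule_format, OF d2] unfolding \<Phi>2_def by simp
    have c7: "FAnd (B (nabla \<Phi>1 E)) (B (nabla \<Phi>2 E)) \<turnstile> B (nabla \<Phi> E)"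
      using e7 prof part unfolding ESF7_def \<Phi>1_def \<Phi>2_def by blast
    have P: "\<forall>v. (\<forall>i\<in>insert x F. sat v (B (nabla [i \<mapsto> the (\<Phi> i)] E))) \<longrightarrow> sat v (B (nabla \<Phi> E))"
      using c7 IH p1 by (auto simp: entails_def)
    moreover have "consistent_set ((\<lambda>i. B (nabla [i \<mapsto> the (\<Phi> i)] E)) ` insert x F) \<longrightarrow>
       (\<forall>v. sat v (B (nabla \<Phi> E)) \<longrightarrow> (\<exists>i\<in>insert x F. sat v (B (nabla [i \<mapsto> the (\<Phi> i)] E))))"
    proof (intro impI allI)
      fix v assume cs: "consistent_set ((\<lambda>i. B (nabla [i \<mapsto> the (\<Phi> i)] E)) ` insert x F)"
        and sv: "sat v (B (nabla \<Phi> E))"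
      from cs obtain v0 where v0: "\<forall>i\<in>insert x F. sat v0 (B (nabla [i \<mapsto> the (\<Phi> i)] E))"
        by (auto simp: consistent_set_def)
      have csF: "consistent_set ((\<lambda>i. B (nabla [i \<mapsto> the (\<Phi> i)] E)) ` F)"
        using v0 by (auto simp: consistent_set_def)
      have "sat v0 (B (nabla \<Phi>2 E))" using IH v0 by blast
      moreover have "sat v0 (B (nabla \<Phi>1 E))" using v0 p1 by simp
      ultimately have "consistent (FAnd (B (nabla \<Phi>1 E)) (B (nabla \<Phi>2 E)))"
        by (auto simp: consistent_def entails_def)
      then have "B (nabla \<Phi> E) \<turnstile> FOr (B (nabla \<Phi>1 E)) (B (nabla \<Phi>2 E))"
        using e8 prof part unfolding ESF8W_def \<Phi>1_def \<Phi>2_def by blast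
      then have "sat v (B (nabla \<Phi>1 E)) \<or> sat v (B (nabla \<Phi>2 E))"
        using sv by (auto simp: entails_def)
      then show "\<exists>i\<in>insert x F. sat v (B (nabla [i \<mapsto> the (\<Phi> i)] E))"
        using IH csF p1 by auto
    qed
    ultimately show "(\<forall>v. (\<forall>i\<in>insert x F. sat v (B (nabla [i \<mapsto> the (\<Phi> i)] E))) \<longrightarrow> sat v (B (nabla \<Phi> E))) \<and>
     (consistent_set ((\<lambda>i. B (nabla [i \<mapsto> the (\<Phi> i)] E)) ` insert x F) \<longrightarrow>
       (\<forall>v. sat v (B (nabla \<Phi> E)) \<longrightarrow> (\<exists>i\<in>insert x F. sat v (B (nabla [i \<mapsto> the (\<Phi> i)] E)))))"
      by blast
  qed
qed

theorem mainTheorem9: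
  fixes B :: "'e \<Rightarrow> 'p::finite form"
    and nabla :: "('s::wellorder \<rightharpoonup> 'e) \<Rightarrow> 'e \<Rightarrow> 'e"
  assumes "epistemic_space B"
    and "ESF7 B nabla"
    and "ESF8W B nabla"
  shows "ESF_P B nabla"
  unfolding ESF_P_def
proof (intro allI impI)
  fix \<Phi> :: "'s \<rightharpoonup> 'e" and E E'
  assume pr: "profile \<Phi>"
    and cs: "consistent_set ((\<lambda>i. B (nabla [i \<mapsto> the (\<Phi> i)] E)) ` dom \<Phi>)"
    and inc: "\<forall>i\<in>dom \<Phi>. FAnd (B (nabla [i \<mapsto> the (\<Phi> i)] E)) (B E') \<turnstile> FBot"
  have K: "\<forall>v. sat v (B (nabla \<Phi> E)) \<longrightarrow> (\<exists>i\<in>dom \<Phi>. sat v (B (nabla [i \<mapsto> the (\<Phi> i)] E)))"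
    using key[OF assms(2,3), of "dom \<Phi>" E] pr cs unfolding profile_def by blast
  show "FAnd (B (nabla \<Phi> E)) (B E') \<turnstile> FBot"
    unfolding entails_def
  proof (intro allI impI)
    fix v assume "sat v (FAnd (B (nabla \<Phi> E)) (B E'))"
    then show "sat v FBot" using K inc by (auto simp: entails_def)
  qed
qed

end
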